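(* Let $J$ and $K$ be subcontinua of the Cantor fan $C=F/{\sim}$ with $v\in K\subseteq J$, and let $r:J\to K$ be a retraction. The following are equivalent: 1. $r$ is simple, i.e. $r(A)\subseteq A$ for every leg $A\in\mathcal L(J)$; 2. there is a retraction $R:F_J\to F_K$ such that $q(R(x))=r(q(x))$ for every $x\in F_J$.
   Context: Let $Y$ be a Cantor set, $F=Y\times[0,1]$, and let $\sim$ be the equivalence relation on $F$ given by $(x,t)\sim(y,s)$ iff $(x,t)=(y,s)$ or $s=t=0$. Let $C=F/{\sim}$ (a Cantor fan), $q:F\to C$ the quotient map, and $v=q(Y\times\{0\})$ the top of $C$. For a subcontinuum $K$ of $C$ put $F_K=q^{-1}(K)$ (the fence of $K$). For a subcontinuum $J$ of $C$ containing $v$ (which is a fan), an end point of $J$ is a point that is an end point of every arc in $J$ containing it; a leg of $J$ is an arc from $v$ to an end point $e\neq v$ of $J$; $\mathcal L(J)$ denotes the set of legs. For $A\in\mathcal L(J)$, $L_A$ denotes the non-degenerate component of $q^{-1}(A)$ (if $A=q(\{y\}\times[0,t])$ then $L_A=\{y\}\times[0,t]$). A retraction from $X$ onto a subspace $Z$ is a continuous map $r:X\to Z$ with $r(z)=z$ for all $z\in Z$. *)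

theory Defs
  imports "HOL-Analysis.Analysis"
begin

definition cantor_set :: "real set" where
  "cantor_set = {x. \<exists>a::nat \<Rightarrow> nat. (\<forall>n. a n \<in> {0, 2}) \<and> x = (\<Sum>n. real (a n) / 3 ^ Suc n)}"

definition fan_F :: "'a::topological_space set \<Rightarrow> ('a \<times> real) set" where
  "fan_F Y = Y \<times> {0..1}"

definition fan_rel :: "('a \<times> real) \<Rightarrow> ('a \<times> real) \<Rightarrow> bool" where
  "fan_rel p p' \<longleftrightarrow> p = p' \<or> (snd p = 0 \<and> snd p' = 0)"

definition fan_q :: "'a::topological_space set \<Rightarrow> ('a \<times> real) \<Rightarrow> ('a \<times> real) set" where
  "fan_q Y p = {p' \<in> fan_F Y. fan_rel p p'}"

definition fan_open :: "'a::topological_space set \<Rightarrow> ('a \<times> real) set set \<Rightarrow> bool" where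
  "fan_open Y U \<longleftrightarrow> U \<subseteq> fan_q Y ` fan_F Y \<and>
     openin (top_of_set (fan_F Y)) {p \<in> fan_F Y. fan_q Y p \<in> U}"

lemma istopology_fan_open: "istopology (fan_open Y)"
proof -
  have 1: "fan_open Y (S \<inter> T)" if a: "fan_open Y S" and b: "fan_open Y T" for S T
  proof -
    have eq: "{p \<in> fan_F Y. fan_q Y p \<in> S \<inter> T} =
        {p \<in> fan_F Y. fan_q Y p \<in> S} \<inter> {p \<in> fan_F Y. fan_q Y p \<in> T}" by auto
    show ?thesis using a b unfolding fan_open_def eq by (auto intro: openin_Int)
  qed
  have 2: "fan_open Y (\<Union>KK)" if a: "\<forall>S\<in>KK. fan_open Y S" for KK
  proof -
    have eq: "{p \<in> fan_F Y. fan_q Y p \<in> \<Union>KK} = (\<Union>S\<in>KK. {p \<in> fan_F Y. fan_q Y p \<in> S})" by auto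
    show ?thesis using a unfolding fan_open_def eq by (auto intro!: openin_Union)
  qed
  show ?thesis unfolding istopology_def using 1 2 by blast
qed

definition fan_C :: "'a::topological_space set \<Rightarrow> ('a \<times> real) set topology" where
  "fan_C Y = topology (fan_open Y)"

definition fan_top :: "'a::topological_space set \<Rightarrow> ('a \<times> real) set" where
  "fan_top Y = Y \<times> {0}"

definition fence :: "'a::topological_space set \<Rightarrow> ('a \<times> real) set set \<Rightarrow> ('a \<times> real) set" where
  "fence Y K = {p \<in> fan_F Y. fan_q Y p \<in> K}"

definition subcontinuum :: "'b topology \<Rightarrow> 'b set \<Rightarrow> bool" where
  "subcontinuum X K \<longleftrightarrow> K \<noteq> {} \<and> compactin X K \<and> connectedin X K"

definition arc_from_to :: "'b topology \<Rightarrow> 'b set \<Rightarrow> 'b \<Rightarrow> 'b \<Rightarrow> bool" where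
  "arc_from_to X A a b \<longleftrightarrow> A \<subseteq> topspace X \<and>
     (\<exists>g. homeomorphic_map (top_of_set {0..1::real}) (subtopology X A) g \<and> g 0 = a \<and> g 1 = b)"

definition is_arc :: "'b topology \<Rightarrow> 'b set \<Rightarrow> bool" where
  "is_arc X A \<longleftrightarrow> (\<exists>a b. arc_from_to X A a b)"

definition arc_endpoint :: "'b topology \<Rightarrow> 'b set \<Rightarrow> 'b \<Rightarrow> bool" where
  "arc_endpoint X A e \<longleftrightarrow> (\<exists>b. arc_from_to X A e b)"

definition end_point :: "'b topology \<Rightarrow> 'b set \<Rightarrow> 'b \<Rightarrow> bool" where
  "end_point X J e \<longleftrightarrow> e \<in> J \<and> (\<forall>A. A \<subseteq> J \<and> is_arc X A \<and> e \<in> A \<longrightarrow> arc_endpoint X A e)"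

definition legs :: "'b topology \<Rightarrow> 'b \<Rightarrow> 'b set \<Rightarrow> 'b set set" where
  "legs X v J = {A. A \<subseteq> J \<and> (\<exists>e. end_point X J e \<and> e \<noteq> v \<and> arc_from_to X A v e)}"

definition retraction_onto :: "'b topology \<Rightarrow> 'b set \<Rightarrow> 'b set \<Rightarrow> ('b \<Rightarrow> 'b) \<Rightarrow> bool" where
  "retraction_onto X S Z r \<longleftrightarrow> Z \<subseteq> S \<and>
     continuous_map (subtopology X S) (subtopology X Z) r \<and> (\<forall>z\<in>Z. r z = z)"

definition simple_retraction :: "'b topology \<Rightarrow> 'b \<Rightarrow> 'b set \<Rightarrow> ('b \<Rightarrow> 'b) \<Rightarrow> bool" where
  "simple_retraction X v J r \<longleftrightarrow> (\<forall>A \<in> legs X v J. r ` A \<subseteq> A)"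

end

theory Submission
  imports Defs
begin


definition cval :: "(nat \<Rightarrow> nat) \<Rightarrow> real" where
  "cval a = (\<Sum>n. real (a n) / 3 ^ Suc n)"

lemma geo23: "(\<lambda>n. 2 / 3 ^ Suc n :: real) sums 1"
proof -
  have "(\<lambda>n. (2/3) * (1/3::real) ^ n) sums ((2/3) * (1 / (1 - 1/3)))"
    by (intro sums_mult geometric_sums) auto
  moreover have "(\<lambda>n. (2/3) * (1/3::real) ^ n) = (\<lambda>n. 2 / 3 ^ Suc n)"
    by (auto simp: power_divide field_simps)
  ultimately show ?thesis by simp
qed

lemma cv_le: "\<forall>n. a n \<in> {0,2} \<Longrightarrow> real (a n) / 3 ^ Suc n \<le> 2 / 3 ^ Suc n"
proof -
  assume "\<forall>n. a n \<in> {0,2}"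
  then have "a n = 0 \<or> a n = 2" by auto
  then have "real (a n) \<le> 2" by auto
  then show ?thesis by (simp add: divide_right_mono)
qed

lemma cv_summable: "\<forall>n. a n \<in> {0,2} \<Longrightarrow> summable (\<lambda>n. real (a n) / 3 ^ Suc n)"
  apply (rule summable_comparison_test[OF _ sums_summable[OF geo23]])
  using cv_le by auto

lemma cval_bounds: "\<forall>n. a n \<in> {0,2} \<Longrightarrow> 0 \<le> cval a \<and> cval a \<le> 1"
proof -
  assume a: "\<forall>n. a n \<in> {0,2}"
  have "0 \<le> cval a" unfolding cval_def by (rule suminf_nonneg[OF cv_summable[OF a]]) auto
  moreover have "cval a \<le> (\<Sum>n. 2 / 3 ^ Suc n)" unfolding cval_def
    by (rule suminf_le[OF _ cv_summable[OF a] sums_summable[OF geo23]]) (use cv_le[OF a] in auto)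
  ultimately show ?thesis using sums_unique[OF geo23] by simp
qed

lemma cval_head: "\<forall>n. a n \<in> {0,2} \<Longrightarrow> cval a = real (a 0) / 3 + cval (\<lambda>n. a (Suc n)) / 3"
proof -
  assume a: "\<forall>n. a n \<in> {0,2}"
  have "cval a = real (a 0) / 3 + (\<Sum>n. real (a (Suc n)) / 3 ^ Suc (Suc n))"
    unfolding cval_def using suminf_split_head[OF cv_summable[OF a]] by simp
  also have "(\<Sum>n. real (a (Suc n)) / 3 ^ Suc (Suc n)) = (\<Sum>n. (real (a (Suc n)) / 3 ^ Suc n) / 3)"
    by (simp add: divide_divide_eq_left mult.commute)
  also have "\<dots> = cval (\<lambda>n. a (Suc n)) / 3" unfolding cval_def
    using suminf_divide[OF cv_summable[of "\<lambda>n. a (Suc n)"], of 3] a by simp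
  finally show ?thesis .
qed

lemma cval_gap: "\<forall>n. a n \<in> {0,2} \<Longrightarrow> cval a \<in> {0..1/3} \<union> {2/3..1}"
proof -
  assume a: "\<forall>n. a n \<in> {0,2}"
  have b: "\<forall>n. a (Suc n) \<in> {0,2}" using a by auto
  from cval_head[OF a] cval_bounds[OF b] a[rule_format, of 0] show ?thesis by auto
qed

lemma cval_scale: "\<forall>a. (\<forall>n. a n \<in> {0,2}) \<longrightarrow> (\<exists>m::int. 3 ^ k * cval a - m \<in> {0..1/3} \<union> {2/3..1})"
proof (induction k)
  case 0
  show ?case
  proof (intro allI impI)
    fix a :: "nat \<Rightarrow> nat" assume "\<forall>n. a n \<in> {0,2}"
    then have "3 ^ 0 * cval a - real_of_int 0 \<in> {0..1/3} \<union> {2/3..1}" using cval_gap by simp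
    then show "\<exists>m::int. 3 ^ 0 * cval a - m \<in> {0..1/3} \<union> {2/3..1}" by blast
  qed
next
  case (Suc k)
  show ?case
  proof (intro allI impI)
    fix a :: "nat \<Rightarrow> nat" assume a: "\<forall>n. a n \<in> {0,2}"
    have b: "\<forall>n. a (Suc n) \<in> {0,2}" using a by auto
    obtain m :: int where m: "3 ^ k * cval (\<lambda>n. a (Suc n)) - m \<in> {0..1/3} \<union> {2/3..1}"
      using mp[OF spec[OF Suc.IH, of "\<lambda>n. a (Suc n)"] b] by (elim exE) blast
    have h3: "3 * cval a = real (a 0) + cval (\<lambda>n. a (Suc n))"
      using cval_head[OF a] by simp
    have "3 ^ Suc k * cval a = 3 ^ k * (3 * cval a)" by simp
    also have "\<dots> = 3 ^ k * real (a 0) + 3 ^ k * cval (\<lambda>n. a (Suc n))"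
      unfolding h3 by (simp add: distrib_left)
    finally have e: "3 ^ Suc k * cval a - real_of_int (m + 3 ^ k * int (a 0)) = 3 ^ k * cval (\<lambda>n. a (Suc n)) - m"
      by simp
    have "3 ^ Suc k * cval a - real_of_int (m + 3 ^ k * int (a 0)) \<in> {0..1/3} \<union> {2/3..1}"
      unfolding e by (rule m)
    then show "\<exists>m::int. 3 ^ Suc k * cval a - m \<in> {0..1/3} \<union> {2/3..1}"
      by blast
  qed
qed

lemma cantor_gap:
  assumes "x \<in> cantor_set" shows "\<exists>m::int. 3 ^ k * x - m \<in> {0..1/3} \<union> {2/3..1}"
  using assms cval_scale unfolding cantor_set_def cval_def[symmetric] by blast

lemma not_cantor_between:
  fixes x z :: real assumes "x < z" shows "\<exists>w. x < w \<and> w < z \<and> w \<notin> cantor_set"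
proof -
  obtain k :: nat where k: "2 / (z - x) < 3 ^ k"
    using real_arch_pow[of 3 "2 / (z - x)"] by auto
  have "2 < 3 ^ k * (z - x)" using k assms by (simp add: field_simps)
  define j where "j = floor (3 ^ k * x)"
  define w :: real where "w = (j + 3/2) / 3 ^ k"
  have j1: "j \<le> 3 ^ k * x" "3 ^ k * x < j + 1" unfolding j_def by linarith+
  have pk: "(0::real) < 3 ^ k" by simp
  have w3: "3 ^ k * w = j + 3/2" unfolding w_def by simp
  have "3 ^ k * x < 3 ^ k * w" using j1 w3 by linarith
  then have "x < w" using mult_less_cancel_left_pos[OF pk] by blast
  moreover have "3 ^ k * w < 3 ^ k * z" using j1 w3 \<open>2 < 3 ^ k * (z - x)\<close>
    by (simp add: right_diff_distrib)
  then have "w < z" using mult_less_cancel_left_pos[OF pk] by blast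
  moreover have "w \<notin> cantor_set"
  proof
    assume "w \<in> cantor_set"
    then obtain m :: int where m: "3 ^ k * w - m \<in> {0..1/3} \<union> {2/3..1}" using cantor_gap by blast
    have e: "3 ^ k * w - m = real_of_int (j - m) + 3/2" using w3 by simp
    have m2: "real_of_int (j - m) + 3/2 \<in> {0..1/3} \<union> {2/3..1}" using m unfolding e .
    define d where "d = j - m"
    have m3: "real_of_int d + 3/2 \<in> {0..1/3} \<union> {2/3..1}" using m2 unfolding d_def .
    have "d \<le> -2 \<or> d = -1 \<or> d \<ge> 0" by linarith
    then have "real_of_int d \<le> -2 \<or> real_of_int d = -1 \<or> real_of_int d \<ge> 0" by auto
    then show False using m3 by auto
  qed
  ultimately show ?thesis by blast
qed



definition ht :: "('a \<times> real) set \<Rightarrow> real" where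
  "ht c = snd (SOME p. p \<in> c)"

definition seg :: "'a::topological_space set \<Rightarrow> 'a \<Rightarrow> real \<Rightarrow> ('a \<times> real) set set" where
  "seg Y y t = (\<lambda>s. fan_q Y (y, s)) ` {0..t}"

lemma inF: "(y, s) \<in> fan_F Y \<longleftrightarrow> y \<in> Y \<and> 0 \<le> s \<and> s \<le> 1"
  by (auto simp: fan_F_def)

lemma openT: "openin (fan_C Y) U \<longleftrightarrow> fan_open Y U"
  by (simp add: fan_C_def istopology_fan_open)

lemma topspaceT: "topspace (fan_C Y) = fan_q Y ` fan_F Y"
proof -
  have "{p \<in> fan_F Y. fan_q Y p \<in> fan_q Y ` fan_F Y} = fan_F Y" by auto
  then have "fan_open Y (fan_q Y ` fan_F Y)"
    unfolding fan_open_def by (simp add: openin_subtopology_self)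
  moreover have "\<And>U. fan_open Y U \<Longrightarrow> U \<subseteq> fan_q Y ` fan_F Y" unfolding fan_open_def by auto
  ultimately show ?thesis
    unfolding topspace_def openT by blast
qed

lemma q0: "y \<in> Y \<Longrightarrow> fan_q Y (y, 0) = fan_top Y"
  by (auto simp: fan_q_def fan_top_def fan_rel_def fan_F_def)

lemma qpos: "(y, s) \<in> fan_F Y \<Longrightarrow> s \<noteq> 0 \<Longrightarrow> fan_q Y (y, s) = {(y, s)}"
  by (auto simp: fan_q_def fan_rel_def)

lemma ht_q: "p \<in> fan_F Y \<Longrightarrow> ht (fan_q Y p) = snd p"
proof -
  assume p: "p \<in> fan_F Y"
  have "p \<in> fan_q Y p" using p by (auto simp: fan_q_def fan_rel_def)
  then have "(SOME p'. p' \<in> fan_q Y p) \<in> fan_q Y p" by (rule someI)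
  then show ?thesis unfolding ht_def by (auto simp: fan_q_def fan_rel_def)
qed

lemma ht_q': "(y, s) \<in> fan_F Y \<Longrightarrow> ht (fan_q Y (y, s)) = s"
  using ht_q by fastforce

lemma ht_top: "y \<in> Y \<Longrightarrow> ht (fan_top Y) = 0"
  using ht_q'[of y 0 Y] q0[of y Y] by (simp add: inF)

lemma q_eq_iff: "p \<in> fan_F Y \<Longrightarrow> p' \<in> fan_F Y \<Longrightarrow> fan_q Y p = fan_q Y p' \<longleftrightarrow> fan_rel p p'"
proof
  assume p: "p \<in> fan_F Y" and eq: "fan_q Y p = fan_q Y p'"
  have "p \<in> fan_q Y p" using p by (simp add: fan_q_def fan_rel_def)
  then have "p \<in> fan_q Y p'" using eq by simp
  then show "fan_rel p p'" by (auto simp: fan_q_def fan_rel_def)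
next
  assume "fan_rel p p'" then show "fan_q Y p = fan_q Y p'"
    by (auto simp: fan_q_def fan_rel_def)
qed

lemma q_inj_pos: "p \<in> fan_F Y \<Longrightarrow> p' \<in> fan_F Y \<Longrightarrow> snd p \<noteq> 0 \<Longrightarrow> fan_q Y p = fan_q Y p' \<Longrightarrow> p = p'"
proof -
  assume a: "p \<in> fan_F Y" "p' \<in> fan_F Y" "snd p \<noteq> 0" "fan_q Y p = fan_q Y p'"
  then have "fan_rel p p'" using q_eq_iff by blast
  then show "p = p'" using a(3) by (auto simp: fan_rel_def)
qed

lemma q_ne_top: "(y, s) \<in> fan_F Y \<Longrightarrow> s \<noteq> 0 \<Longrightarrow> fan_q Y (y, s) \<noteq> fan_top Y"
  using qpos[of y s Y] by (auto simp: fan_top_def)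

lemma q_eq_top: "p \<in> fan_F Y \<Longrightarrow> fan_q Y p = fan_top Y \<longleftrightarrow> snd p = 0"
proof -
  assume p: "p \<in> fan_F Y"
  obtain y s where ys: "p = (y, s)" by force
  show ?thesis
  proof (cases "s = 0")
    case True then show ?thesis using q0[of y Y] p ys by (simp add: inF)
  next
    case False then show ?thesis using q_ne_top[of y s Y] p ys by simp
  qed
qed

lemma q_cont: "continuous_map (top_of_set (fan_F Y)) (fan_C Y) (fan_q Y)"
  unfolding continuous_map_def topspaceT openT fan_open_def by auto

lemma quot_cont:
  assumes "continuous_map (top_of_set (fan_F Y)) X (f \<circ> fan_q Y)"
  shows "continuous_map (fan_C Y) X f"
proof -
  have 1: "f \<in> topspace (fan_C Y) \<rightarrow> topspace X"
    using assms unfolding topspaceT continuous_map_def by auto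
  have 2: "openin (fan_C Y) {x \<in> topspace (fan_C Y). f x \<in> U}" if "openin X U" for U
  proof -
    have "{p \<in> fan_F Y. fan_q Y p \<in> {x \<in> topspace (fan_C Y). f x \<in> U}} = {p \<in> topspace (top_of_set (fan_F Y)). (f \<circ> fan_q Y) p \<in> U}"
      unfolding topspaceT by auto
    then show ?thesis unfolding openT fan_open_def topspaceT
      using openin_continuous_map_preimage[OF assms that] by auto
  qed
  show ?thesis using 1 2 unfolding continuous_map_def by blast
qed

lemma sat_open:
  assumes "P \<subseteq> fan_F Y" "openin (top_of_set (fan_F Y)) P"
    and "\<And>p p'. p \<in> P \<Longrightarrow> p' \<in> fan_F Y \<Longrightarrow> fan_rel p p' \<Longrightarrow> p' \<in> P"
  shows "openin (fan_C Y) (fan_q Y ` P)"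
proof -
  have "{p \<in> fan_F Y. fan_q Y p \<in> fan_q Y ` P} = P"
  proof safe
    fix p p' assume "p \<in> fan_F Y" "p' \<in> P" "fan_q Y p = fan_q Y p'"
    then show "p \<in> P" using assms(1,3) q_eq_iff[of p' Y p] by (metis subsetD)
  qed (use assms(1) in auto)
  then show ?thesis unfolding openT fan_open_def using assms by auto
qed

lemma ht_cont: "continuous_map (fan_C Y) euclideanreal ht"
proof (rule quot_cont)
  have "continuous_on (fan_F Y) snd" by (intro continuous_intros)
  then have "continuous_on (fan_F Y) (ht \<circ> fan_q Y)"
    by (rule continuous_on_cong[THEN iffD1, rotated 2]) (auto simp: ht_q)
  then show "continuous_map (top_of_set (fan_F Y)) euclideanreal (ht \<circ> fan_q Y)" by simp
qed

lemma topT_elim: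
  assumes "c \<in> topspace (fan_C Y)"
  obtains y s where "(y, s) \<in> fan_F Y" "c = fan_q Y (y, s)"
proof -
  obtain p where p: "p \<in> fan_F Y" "c = fan_q Y p" using assms unfolding topspaceT by blast
  obtain y s where "p = (y, s)" by force
  then show ?thesis using p that by blast
qed

lemma ray_cont:
  assumes "y \<in> Y" "continuous_on S f" "f ` S \<subseteq> {0..1}"
  shows "continuous_map (top_of_set S) (fan_C Y) (\<lambda>c. fan_q Y (y, f c))"
proof -
  have "continuous_map (top_of_set S) (top_of_set (fan_F Y)) (\<lambda>c. (y, f c))"
  proof -
    have "continuous_on S (\<lambda>c. (y, f c))" using assms(2) by (intro continuous_intros)
    moreover have "(\<lambda>c. (y, f c)) \<in> S \<rightarrow> fan_F Y" using assms(1,3) by (auto simp: inF)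
    ultimately show ?thesis by simp
  qed
  from continuous_map_compose[OF this q_cont] show ?thesis by (simp add: o_def)
qed

lemma open_upper:
  assumes "openin (top_of_set Y) V" "a \<ge> 0"
  shows "openin (fan_C Y) (fan_q Y ` {p \<in> fan_F Y. fst p \<in> V \<and> snd p > a})"
proof (rule sat_open)
  obtain U where U: "open U" "V = Y \<inter> U" using assms(1) openin_open by metis
  have "{p \<in> fan_F Y. fst p \<in> V \<and> snd p > a} = fan_F Y \<inter> (U \<times> {a<..})"
    unfolding U(2) fan_F_def by auto
  moreover have "open (U \<times> {a<..})" using U(1) by (intro open_Times) auto
  ultimately show "openin (top_of_set (fan_F Y)) {p \<in> fan_F Y. fst p \<in> V \<and> snd p > a}"
    by (metis inf_commute openin_open_Int)
next
  fix p p' assume "p \<in> {p \<in> fan_F Y. fst p \<in> V \<and> a < snd p}" "p' \<in> fan_F Y" "fan_rel p p'"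
  then show "p' \<in> {p \<in> fan_F Y. fst p \<in> V \<and> a < snd p}" using assms(2) by (auto simp: fan_rel_def)
qed auto

lemma open_lower:
  assumes "openin (top_of_set Y) (Y - V)" "s > 0"
  shows "openin (fan_C Y) (fan_q Y ` {p \<in> fan_F Y. fst p \<notin> V \<or> snd p < s})"
proof (rule sat_open)
  obtain U where U: "open U" "Y - V = Y \<inter> U" using assms(1) openin_open by metis
  have "{p \<in> fan_F Y. fst p \<notin> V \<or> snd p < s} = fan_F Y \<inter> ((U \<times> UNIV) \<union> (UNIV \<times> {..<s}))"
  proof (intro set_eqI iffI)
    have key: "\<And>y. y \<in> Y \<Longrightarrow> y \<notin> V \<longleftrightarrow> y \<in> U" using U(2) by blast
    fix p
    { assume "p \<in> {p \<in> fan_F Y. fst p \<notin> V \<or> snd p < s}"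
      then show "p \<in> fan_F Y \<inter> ((U \<times> UNIV) \<union> (UNIV \<times> {..<s}))"
        using key[of "fst p"] by (auto simp: fan_F_def mem_Times_iff) }
    { assume "p \<in> fan_F Y \<inter> ((U \<times> UNIV) \<union> (UNIV \<times> {..<s}))"
      then show "p \<in> {p \<in> fan_F Y. fst p \<notin> V \<or> snd p < s}"
        using key[of "fst p"] by (auto simp: fan_F_def mem_Times_iff) }
  qed
  moreover have "open ((U \<times> UNIV) \<union> (UNIV \<times> {..<s}))" using U(1) by (intro open_Un open_Times) auto
  ultimately show "openin (top_of_set (fan_F Y)) {p \<in> fan_F Y. fst p \<notin> V \<or> snd p < s}"
    by (metis inf_commute openin_open_Int)
next
  fix p p' assume "p \<in> {p \<in> fan_F Y. fst p \<notin> V \<or> snd p < s}" "p' \<in> fan_F Y" "fan_rel p p'"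
  then show "p' \<in> {p \<in> fan_F Y. fst p \<notin> V \<or> snd p < s}" using assms(2) by (auto simp: fan_rel_def)
qed auto



locale cfan =
  fixes Y :: "'a::topological_space set" and h :: "'a \<Rightarrow> real" and g :: "real \<Rightarrow> 'a"
  assumes hom: "homeomorphism Y cantor_set h g"
begin

lemma h_props: "continuous_on Y h" "continuous_on cantor_set g" "\<And>x. x \<in> Y \<Longrightarrow> g (h x) = x"
  "h ` Y = cantor_set" "g ` cantor_set = Y"
  using hom unfolding homeomorphism_def by auto

lemma zd:
  assumes Z: "closedin (top_of_set Y) Z" and y: "y \<in> Y" "y \<notin> Z"
  shows "\<exists>V. openin (top_of_set Y) V \<and> openin (top_of_set Y) (Y - V) \<and> y \<in> V \<and> V \<inter> Z = {}"
proof -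
  have ZY: "Z \<subseteq> Y" using closedin_subset[OF Z] by simp
  have hZ: "h ` Z = cantor_set \<inter> g -` Z"
  proof
    show "h ` Z \<subseteq> cantor_set \<inter> g -` Z"
    proof
      fix x assume "x \<in> h ` Z"
      then obtain z where z: "z \<in> Z" "x = h z" by blast
      then have zY: "z \<in> Y" using ZY by blast
      then show "x \<in> cantor_set \<inter> g -` Z" using z h_props(3)[OF zY] h_props(4) by blast
    qed
    show "cantor_set \<inter> g -` Z \<subseteq> h ` Z"
    proof
      fix x assume x: "x \<in> cantor_set \<inter> g -` Z"
      then obtain y' where "y' \<in> Y" "x = h y'" using h_props(4) by blast
      then show "x \<in> h ` Z" using x h_props(3) by auto
    qed
  qed
  have "closedin (top_of_set cantor_set) (cantor_set \<inter> g -` Z)"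
    by (rule continuous_closedin_preimage_gen[OF h_props(2) _ Z]) (use h_props(5) in auto)
  then obtain C where C: "closed C" "h ` Z = cantor_set \<inter> C" unfolding hZ closedin_closed by blast
  have hy: "h y \<notin> C"
  proof
    assume "h y \<in> C"
    then have "h y \<in> h ` Z" using C y h_props(4) by auto
    then obtain z where "z \<in> Z" "h z = h y" by auto
    moreover have "g (h z) = z" "g (h y) = y" using h_props(3) ZY y \<open>z \<in> Z\<close> by auto
    ultimately have "z = y" by metis
    then show False using \<open>z \<in> Z\<close> y by simp
  qed
  have "open (- C)" using C(1) by (simp add: open_Compl)
  moreover have "h y \<in> - C" using hy by simp
  ultimately obtain d where d: "d > 0" "ball (h y) d \<subseteq> - C"
    using open_contains_ball[of "- C"] by blast
  obtain a where a: "h y - d < a" "a < h y" "a \<notin> cantor_set"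
    using not_cantor_between[of "h y - d" "h y"] d by auto
  obtain b where b: "h y < b" "b < h y + d" "b \<notin> cantor_set"
    using not_cantor_between[of "h y" "h y + d"] d by auto
  define V where "V = Y \<inter> h -` {a<..<b}"
  have hY: "\<And>x. x \<in> Y \<Longrightarrow> h x \<in> cantor_set" using h_props(4) by auto
  have "Y - V = Y \<inter> h -` ({..<a} \<union> {b<..})"
  proof -
    have "\<And>x. x \<in> Y \<Longrightarrow> h x \<noteq> a \<and> h x \<noteq> b" using hY a b by metis
    then show ?thesis unfolding V_def by force
  qed
  moreover have "open ({..<a} \<union> {b<..})" by (intro open_Un) auto
  ultimately have "openin (top_of_set Y) (Y - V)"
    using continuous_openin_preimage_gen[OF h_props(1)] by metis
  moreover have "openin (top_of_set Y) V"
    unfolding V_def by (rule continuous_openin_preimage_gen[OF h_props(1)]) auto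
  moreover have "y \<in> V" using a b y unfolding V_def by auto
  moreover have "V \<inter> Z = {}"
  proof (rule ccontr)
    assume "V \<inter> Z \<noteq> {}"
    then obtain z where z: "z \<in> V" "z \<in> Z" by blast
    then have "h z \<in> ball (h y) d" using a b unfolding V_def by (auto simp: dist_real_def)
    then have "h z \<notin> C" using d by auto
    moreover have "h z \<in> C" using C(2) z(2) by auto
    ultimately show False by simp
  qed
  ultimately show ?thesis by blast
qed

lemma sep:
  assumes "y1 \<in> Y" "y2 \<in> Y" "y1 \<noteq> y2"
  shows "\<exists>V. openin (top_of_set Y) V \<and> openin (top_of_set Y) (Y - V) \<and> y1 \<in> V \<and> y2 \<notin> V"
proof -
  have "{y2} = Y \<inter> h -` {h y2}"
  proof
    show "Y \<inter> h -` {h y2} \<subseteq> {y2}" using h_props(3) assms(2) by (auto, metis)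
  qed (use assms in auto)
  moreover have "closedin (top_of_set Y) (Y \<inter> h -` {h y2})"
    by (rule continuous_closedin_preimage[OF h_props(1)]) auto
  ultimately have "closedin (top_of_set Y) {y2}" by simp
  from zd[OF this assms(1)] assms(3) show ?thesis by blast
qed

lemma elem_pos:
  assumes "x \<in> topspace (fan_C Y)" "x \<noteq> fan_top Y"
  obtains y s where "(y, s) \<in> fan_F Y" "s > 0" "x = fan_q Y (y, s)"
proof -
  obtain y s where ys: "(y, s) \<in> fan_F Y" "x = fan_q Y (y, s)" using topT_elim[OF assms(1)] by blast
  then have "s \<noteq> 0" using q0 assms(2) by (auto simp: inF)
  then show ?thesis using that ys by (auto simp: inF)
qed

lemma disj_upper:
  assumes "V \<inter> W = {}"
  shows "fan_q Y ` {p \<in> fan_F Y. fst p \<in> V \<and> snd p > 0} \<inter> fan_q Y ` {p \<in> fan_F Y. fst p \<in> W \<and> snd p > 0} = {}"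
proof (rule ccontr)
  assume "\<not> ?thesis"
  then obtain p p' where "p \<in> fan_F Y" "fst p \<in> V" "snd p > 0" "p' \<in> fan_F Y" "fst p' \<in> W" "fan_q Y p = fan_q Y p'"
    by blast
  then have "p = p'" using q_inj_pos by (metis less_irrefl)
  then show False using assms \<open>fst p \<in> V\<close> \<open>fst p' \<in> W\<close> by auto
qed

lemma hausT: "Hausdorff_space (fan_C Y)"
  unfolding Hausdorff_space_def
proof (intro allI impI, elim conjE)
  fix c1 c2 assume c1: "c1 \<in> topspace (fan_C Y)" and c2: "c2 \<in> topspace (fan_C Y)" and ne: "c1 \<noteq> c2"
  obtain y1 s1 where 1: "(y1, s1) \<in> fan_F Y" "c1 = fan_q Y (y1, s1)" using topT_elim[OF c1] by blast
  obtain y2 s2 where 2: "(y2, s2) \<in> fan_F Y" "c2 = fan_q Y (y2, s2)" using topT_elim[OF c2] by blast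
  show "\<exists>U V. openin (fan_C Y) U \<and> openin (fan_C Y) V \<and> c1 \<in> U \<and> c2 \<in> V \<and> disjnt U V"
  proof (cases "s1 = s2")
    case False
    define d where "d = \<bar>s1 - s2\<bar> / 2"
    have d: "d > 0" using False d_def by auto
    let ?U = "{x \<in> topspace (fan_C Y). ht x \<in> ball s1 d}"
    let ?V = "{x \<in> topspace (fan_C Y). ht x \<in> ball s2 d}"
    have "openin (fan_C Y) ?U" "openin (fan_C Y) ?V"
      by (rule openin_continuous_map_preimage[OF ht_cont], simp)+
    moreover have "c1 \<in> ?U" "c2 \<in> ?V" using 1 2 c1 c2 d by (auto simp: ht_q')
    moreover have "disjnt ?U ?V" unfolding disjnt_def d_def by (auto simp: dist_real_def) (smt (verit))
    ultimately show ?thesis by blast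
  next
    case True
    have "s1 \<noteq> 0" using ne 1 2 True q0[of y1 Y] q0[of y2 Y] by (auto simp: inF)
    then have s1: "s1 > 0" using 1 by (auto simp: inF)
    have "y1 \<noteq> y2" using ne 1 2 True by auto
    then obtain V where V: "openin (top_of_set Y) V" "openin (top_of_set Y) (Y - V)" "y1 \<in> V" "y2 \<notin> V"
      using sep 1 2 by (meson inF)
    let ?U1 = "fan_q Y ` {p \<in> fan_F Y. fst p \<in> V \<and> snd p > 0}"
    let ?U2 = "fan_q Y ` {p \<in> fan_F Y. fst p \<in> Y - V \<and> snd p > 0}"
    have "openin (fan_C Y) ?U1" "openin (fan_C Y) ?U2" using open_upper[OF V(1), of 0] open_upper[OF V(2), of 0] by auto
    moreover have "c1 \<in> ?U1" using 1 V s1 by auto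
    moreover have "c2 \<in> ?U2" using 2 V s1 True by (auto simp: inF)
    moreover have "disjnt ?U1 ?U2" unfolding disjnt_def by (rule disj_upper) auto
    ultimately show ?thesis by blast
  qed
qed

lemma conn_ray:
  assumes S: "connectedin (fan_C Y) S" and v: "fan_top Y \<notin> S"
    and ys: "(y, s) \<in> fan_F Y" "fan_q Y (y, s) \<in> S" and c: "c \<in> S"
  shows "\<exists>u. (y, u) \<in> fan_F Y \<and> u > 0 \<and> c = fan_q Y (y, u)"
proof -
  have St: "S \<subseteq> topspace (fan_C Y)" using connectedin_subset_topspace[OF S] .
  have "c \<in> topspace (fan_C Y)" "c \<noteq> fan_top Y" using St c v by auto
  then obtain y' u where y'u: "(y', u) \<in> fan_F Y" "u > 0" "c = fan_q Y (y', u)"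
    using elem_pos by blast
  have s0: "s > 0"
  proof -
    have "s \<noteq> 0" using ys v q0[of y Y] by (auto simp: inF)
    then show ?thesis using ys by (auto simp: inF)
  qed
  show ?thesis
  proof (cases "y' = y")
    case True then show ?thesis using y'u by blast
  next
    case False
    have yY: "y \<in> Y" "y' \<in> Y" using ys y'u by (auto simp: inF)
    have "y \<noteq> y'" using False by simp
    then obtain V where V: "openin (top_of_set Y) V" "openin (top_of_set Y) (Y - V)" "y \<in> V" "y' \<notin> V"
      using sep[OF yY] by blast
    let ?U1 = "fan_q Y ` {p \<in> fan_F Y. fst p \<in> V \<and> snd p > 0}"
    let ?U2 = "fan_q Y ` {p \<in> fan_F Y. fst p \<in> Y - V \<and> snd p > 0}"
    have o: "openin (fan_C Y) ?U1" "openin (fan_C Y) ?U2" using open_upper[OF V(1), of 0] open_upper[OF V(2), of 0] by auto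
    have cov: "S \<subseteq> ?U1 \<union> ?U2"
    proof
      fix x assume x: "x \<in> S"
      have "x \<in> topspace (fan_C Y)" "x \<noteq> fan_top Y" using St x v by auto
      then obtain y'' w where w: "(y'', w) \<in> fan_F Y" "w > 0" "x = fan_q Y (y'', w)"
        using elem_pos by blast
      show "x \<in> ?U1 \<union> ?U2"
      proof (cases "y'' \<in> V")
        case True
        then show ?thesis using w by (intro UnI1 image_eqI[of _ _ "(y'', w)"]) auto
      next
        case False
        then show ?thesis using w by (intro UnI2 image_eqI[of _ _ "(y'', w)"]) (auto simp: inF)
      qed
    qed
    have dj: "?U1 \<inter> ?U2 \<inter> S = {}" using disj_upper[of V "Y - V"] by auto
    have "fan_q Y (y, s) \<in> ?U1" using ys s0 V by (intro image_eqI[of _ _ "(y, s)"]) auto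
    then have "?U1 \<inter> S \<noteq> {}" using ys by blast
    moreover have "c \<in> ?U2" using y'u V by (intro image_eqI[of _ _ "(y', u)"]) (auto simp: inF)
    then have "?U2 \<inter> S \<noteq> {}" using c by blast
    ultimately show ?thesis using connectedinD[OF S o cov dj] by blast
  qed
qed

lemma seg_sub: "y \<in> Y \<Longrightarrow> t \<le> 1 \<Longrightarrow> seg Y y t \<subseteq> topspace (fan_C Y)"
  unfolding seg_def topspaceT by (auto simp: inF)

lemma seg_homeo:
  assumes y: "y \<in> Y" and t: "0 < t" "t \<le> 1"
  shows "homeomorphic_map (top_of_set {0..1}) (subtopology (fan_C Y) (seg Y y t)) (\<lambda>c. fan_q Y (y, t * c))"
proof (rule continuous_imp_homeomorphic_map)
  have im: "(\<lambda>c. t * c) ` {0..1} \<subseteq> {0..1}"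
    using t by (auto simp: mult_le_one)
  have "continuous_map (top_of_set {0..1}) (fan_C Y) (\<lambda>c. fan_q Y (y, t * c))"
    by (rule ray_cont[OF y _ im]) (intro continuous_intros)
  moreover have "(\<lambda>c. fan_q Y (y, t * c)) \<in> topspace (top_of_set {0..1}) \<rightarrow> seg Y y t"
    using t unfolding seg_def by (auto intro!: imageI)
  ultimately show "continuous_map (top_of_set {0..1}) (subtopology (fan_C Y) (seg Y y t)) (\<lambda>c. fan_q Y (y, t * c))"
    by (rule continuous_map_into_subtopology)
  show "compact_space (top_of_set {0..1::real})"
    by (rule compact_space_subtopology) simp
  show "Hausdorff_space (subtopology (fan_C Y) (seg Y y t))"
    by (rule Hausdorff_space_subtopology[OF hausT])
  have "topspace (subtopology (fan_C Y) (seg Y y t)) = seg Y y t"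
    using seg_sub[OF y t(2)] by auto
  moreover have "(\<lambda>c. fan_q Y (y, t * c)) ` {0..1} = seg Y y t"
  proof
    show "(\<lambda>c. fan_q Y (y, t * c)) ` {0..1} \<subseteq> seg Y y t"
      using t unfolding seg_def by (auto intro!: imageI)
    show "seg Y y t \<subseteq> (\<lambda>c. fan_q Y (y, t * c)) ` {0..1}"
    proof
      fix x assume "x \<in> seg Y y t"
      then obtain s where s: "s \<in> {0..t}" "x = fan_q Y (y, s)" unfolding seg_def by auto
      then have "s / t \<in> {0..1}" "t * (s / t) = s" using t by auto
      then show "x \<in> (\<lambda>c. fan_q Y (y, t * c)) ` {0..1}" using s by (metis image_eqI)
    qed
  qed
  ultimately show "(\<lambda>c. fan_q Y (y, t * c)) ` topspace (top_of_set {0..1}) = topspace (subtopology (fan_C Y) (seg Y y t))"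
    by simp
  show "inj_on (\<lambda>c. fan_q Y (y, t * c)) (topspace (top_of_set {0..1}))"
  proof (rule inj_onI)
    fix a b assume ab: "a \<in> topspace (top_of_set {0..1::real})" "b \<in> topspace (top_of_set {0..1::real})"
      "fan_q Y (y, t * a) = fan_q Y (y, t * b)"
    have "(y, t * a) \<in> fan_F Y" "(y, t * b) \<in> fan_F Y" using ab(1,2) y t by (auto simp: inF mult_le_one)
    then have "t * a = t * b" using ht_q' ab(3) by metis
    then show "a = b" using t by simp
  qed
qed

lemma arc_seg:
  assumes y: "y \<in> Y" and t: "0 < t" "t \<le> 1"
  shows "arc_from_to (fan_C Y) (seg Y y t) (fan_top Y) (fan_q Y (y, t))"
  unfolding arc_from_to_def
  using seg_sub[OF y t(2)] seg_homeo[OF y t] q0[OF y] by (intro conjI exI[of _ "\<lambda>c. fan_q Y (y, t * c)"]) auto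

end


context cfan begin

lemma arc_facts:
  assumes hm: "homeomorphic_map (top_of_set {0..1::real}) (subtopology (fan_C Y) A) \<gamma>"
    and A: "A \<subseteq> topspace (fan_C Y)"
  shows "continuous_map (top_of_set {0..1::real}) (fan_C Y) \<gamma>" "\<gamma> ` {0..1::real} = A" "inj_on \<gamma> {0..1::real}"
    "continuous_on {0..1} (ht \<circ> \<gamma>)"
proof -
  show c: "continuous_map (top_of_set {0..1::real}) (fan_C Y) \<gamma>"
    using continuous_map_into_fulltopology[OF homeomorphic_imp_continuous_map[OF hm]] .
  have "\<gamma> ` topspace (top_of_set {0..1::real}) = topspace (subtopology (fan_C Y) A)"
    using homeomorphic_imp_surjective_map[OF hm] .
  then show "\<gamma> ` {0..1} = A" using A by auto
  show "inj_on \<gamma> {0..1}" using homeomorphic_imp_injective_map[OF hm] by simp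
  have "continuous_map (top_of_set {0..1::real}) euclideanreal (ht \<circ> \<gamma>)"
    using continuous_map_compose[OF c ht_cont] .
  then show "continuous_on {0..1} (ht \<circ> \<gamma>)" by simp
qed

lemma seg_elem:
  assumes "x \<in> seg Y y u" "y \<in> Y" "u \<le> 1"
  shows "x = fan_q Y (y, ht x)" "0 \<le> ht x" "ht x \<le> u"
proof -
  obtain s where s: "s \<in> {0..u}" "x = fan_q Y (y, s)" using assms(1) unfolding seg_def by auto
  have "(y, s) \<in> fan_F Y" using s assms by (auto simp: inF)
  then have "ht x = s" using s ht_q' by simp
  then show "x = fan_q Y (y, ht x)" "0 \<le> ht x" "ht x \<le> u" using s by auto
qed

lemma seg_mem: "s \<in> {0..u} \<Longrightarrow> fan_q Y (y, s) \<in> seg Y y u"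
  unfolding seg_def by auto

lemma not_endpoint:
  assumes y: "y \<in> Y" and t: "0 < t" "t < u" "u \<le> 1"
  shows "\<not> arc_endpoint (fan_C Y) (seg Y y u) (fan_q Y (y, t))"
proof
  assume "arc_endpoint (fan_C Y) (seg Y y u) (fan_q Y (y, t))"
  then obtain \<gamma> where hm: "homeomorphic_map (top_of_set {0..1::real}) (subtopology (fan_C Y) (seg Y y u)) \<gamma>"
    and g0: "\<gamma> 0 = fan_q Y (y, t)"
    unfolding arc_endpoint_def arc_from_to_def by blast
  have segT: "seg Y y u \<subseteq> topspace (fan_C Y)" using seg_sub y t by simp
  note af = arc_facts[OF hm segT]
  define f where "f = ht \<circ> \<gamma>"
  have fc: "continuous_on {0..1} f" using af(4) unfolding f_def .
  have gf: "\<And>c. c \<in> {0..1} \<Longrightarrow> \<gamma> c = fan_q Y (y, f c)"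
  proof -
    fix c :: real assume "c \<in> {0..1}"
    then have "\<gamma> c \<in> seg Y y u" using af(2) by blast
    then show "\<gamma> c = fan_q Y (y, f c)" using seg_elem y t unfolding f_def by simp
  qed
  have yt: "(y, t) \<in> fan_F Y" using y t by (auto simp: inF)
  have f0: "f 0 = t" unfolding f_def using g0 ht_q'[OF yt] by simp
  have "fan_q Y (y, 0) \<in> seg Y y u" using t by (intro seg_mem) auto
  then obtain c1 where c1: "c1 \<in> {0..1}" "\<gamma> c1 = fan_q Y (y, 0)" using af(2) by (metis imageE)
  have "(y, 0) \<in> fan_F Y" using y by (auto simp: inF)
  then have fc1: "f c1 = 0" unfolding f_def using c1 ht_q' by simp
  have "fan_q Y (y, u) \<in> seg Y y u" using t by (intro seg_mem) auto
  then obtain c2 where c2: "c2 \<in> {0..1}" "\<gamma> c2 = fan_q Y (y, u)" using af(2) by (metis imageE)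
  have "(y, u) \<in> fan_F Y" using y t by (auto simp: inF)
  then have fc2: "f c2 = u" unfolding f_def using c2 ht_q' by simp
  have c1p: "c1 > 0" using c1 fc1 f0 t by (cases "c1 = 0") auto
  have c2p: "c2 > 0" using c2 fc2 f0 t by (cases "c2 = 0") auto
  obtain c3 where c3: "min c1 c2 \<le> c3" "c3 \<le> max c1 c2" "f c3 = t"
  proof (cases "c1 \<le> c2")
    case True
    have "continuous_on {c1..c2} f" by (rule continuous_on_subset[OF fc]) (use c1 c2 in auto)
    then obtain x where "c1 \<le> x" "x \<le> c2" "f x = t" using IVT'[of f c1 t c2] fc1 fc2 t True by auto
    then show ?thesis using that True by auto
  next
    case False
    have "continuous_on {c2..c1} f" by (rule continuous_on_subset[OF fc]) (use c1 c2 in auto)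
    then obtain x where "c2 \<le> x" "x \<le> c1" "f x = t" using IVT2'[of f c1 t c2] fc1 fc2 t False by auto
    then show ?thesis using that False by auto
  qed
  have c3i: "c3 \<in> {0..1}" using c3 c1 c2 c1p c2p by auto
  have "\<gamma> c3 = \<gamma> 0" using gf[OF c3i] c3 g0 by simp
  then have "c3 = 0" using af(3) c3i by (auto dest: inj_onD)
  then show False using c3 c1p c2p by auto
qed

lemma leg_is_seg:
  assumes A: "arc_from_to (fan_C Y) A (fan_top Y) e"
    and e: "e = fan_q Y (y, t)" "(y, t) \<in> fan_F Y" "t > 0"
  shows "A = seg Y y t"
proof -
  obtain \<gamma> where hm: "homeomorphic_map (top_of_set {0..1::real}) (subtopology (fan_C Y) A) \<gamma>"
    and g0: "\<gamma> 0 = fan_top Y" and g1: "\<gamma> 1 = e" and AT: "A \<subseteq> topspace (fan_C Y)"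
    using A unfolding arc_from_to_def by blast
  note af = arc_facts[OF hm AT]
  have y: "y \<in> Y" "t \<le> 1" using e by (auto simp: inF)
  define f where "f = ht \<circ> \<gamma>"
  have fc: "continuous_on {0..1} f" using af(4) unfolding f_def .
  have f0: "f 0 = 0" unfolding f_def using g0 ht_top[OF y(1)] by simp
  have f1: "f 1 = t" unfolding f_def using g1 e ht_q' by simp
  have conS: "connectedin (fan_C Y) (\<gamma> ` {0<..1})"
  proof (rule connectedin_continuous_map_image[OF af(1)])
    show "connectedin (top_of_set {0..1::real}) {0<..1::real}"
      unfolding connectedin_subtopology by auto
  qed
  have vS: "fan_top Y \<notin> \<gamma> ` {0<..1}"
  proof
    assume "fan_top Y \<in> \<gamma> ` {0<..1}"
    then obtain c where c: "c \<in> {0<..1}" "\<gamma> c = \<gamma> 0" using g0 by auto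
    then have "c = 0" using af(3) by (auto dest: inj_onD)
    then show False using c by simp
  qed
  have eS: "fan_q Y (y, t) \<in> \<gamma> ` {0<..1}" using g1 e by force
  have gf: "\<gamma> c = fan_q Y (y, f c) \<and> f c > 0" if c: "c \<in> {0<..1}" for c
  proof -
    have "\<gamma> c \<in> \<gamma> ` {0<..1}" using c by blast
    then obtain u where u: "(y, u) \<in> fan_F Y" "u > 0" "\<gamma> c = fan_q Y (y, u)"
      using conn_ray[OF conS vS e(2) eS] by blast
    then have "f c = u" unfolding f_def using ht_q' by simp
    then show ?thesis using u by simp
  qed
  show ?thesis
  proof
    show "A \<subseteq> seg Y y t"
    proof
      fix x assume "x \<in> A"
      then obtain c where c: "c \<in> {0..1}" "x = \<gamma> c" using af(2) by blast
      show "x \<in> seg Y y t"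
      proof (cases "c = 0")
        case True
        then show ?thesis using c g0 q0[OF y(1)] seg_mem[of 0 t y] e by auto
      next
        case False
        then have cp: "c \<in> {0<..1}" using c by auto
        have "f c \<le> t"
        proof (rule ccontr)
          assume "\<not> f c \<le> t"
          have "continuous_on {0..c} f" by (rule continuous_on_subset[OF fc]) (use c in auto)
          then obtain c' where c': "0 \<le> c'" "c' \<le> c" "f c' = t"
            using IVT'[of f 0 t c] f0 e \<open>\<not> f c \<le> t\<close> c by auto
          have "c' \<noteq> 0" using c' f0 e by auto
          then have "c' \<in> {0<..1}" using c' c by auto
          then have "\<gamma> c' = \<gamma> 1" using gf g1 e c' by simp
          then have "c' = 1" using af(3) c' c by (auto dest: inj_onD)
          then have "c = 1" using c' c by simp
          then show False using f1 \<open>\<not> f c \<le> t\<close> by simp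
        qed
        then show ?thesis using gf[OF cp] c seg_mem[of "f c" t y] by auto
      qed
    qed
    show "seg Y y t \<subseteq> A"
    proof
      fix x assume "x \<in> seg Y y t"
      then obtain s where s: "s \<in> {0..t}" "x = fan_q Y (y, s)" unfolding seg_def by auto
      obtain c where c: "0 \<le> c" "c \<le> 1" "f c = s" using IVT'[of f 0 s 1] f0 f1 s fc by auto
      show "x \<in> A"
      proof (cases "c = 0")
        case True
        then have "s = 0" using c f0 by simp
        then have "x = \<gamma> 0" using s g0 q0[OF y(1)] by simp
        then show ?thesis using af(2) by force
      next
        case False
        then have "c \<in> {0<..1}" using c by auto
        then have "x = \<gamma> c" using gf s c by simp
        then show ?thesis using af(2) c by force
      qed
    qed
  qed
qed

end


context cfan begin

lemma ray_J:
  assumes Jc: "compactin (fan_C Y) J" and Jconn: "connectedin (fan_C Y) J"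
    and vJ: "fan_top Y \<in> J" and y: "y \<in> Y"
  obtains t where "0 \<le> t" "t \<le> 1" "fan_q Y (y, t) \<in> J"
    "\<And>s. 0 \<le> s \<Longrightarrow> s \<le> 1 \<Longrightarrow> fan_q Y (y, s) \<in> J \<Longrightarrow> s \<le> t"
    "\<And>s. 0 \<le> s \<Longrightarrow> s \<le> t \<Longrightarrow> fan_q Y (y, s) \<in> J"
proof -
  have Jcl: "closedin (fan_C Y) J" using compactin_imp_closedin[OF hausT Jc] .
  have JT: "J \<subseteq> topspace (fan_C Y)" using compactin_subset_topspace[OF Jc] .
  have rc: "continuous_map (top_of_set {0..1}) (fan_C Y) (\<lambda>c. fan_q Y (y, c))"
    using ray_cont[OF y, of "{0..1}" "\<lambda>s. s"] by simp
  define Z where "Z = {s \<in> topspace (top_of_set {0..1::real}). fan_q Y (y, s) \<in> J}"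
  have "closedin (top_of_set {0..1}) Z"
    unfolding Z_def by (rule closedin_continuous_map_preimage[OF rc Jcl])
  then have Zc: "closed Z" by (rule closedin_closed_trans) simp
  have Zeq: "Z = {s \<in> {0..1}. fan_q Y (y, s) \<in> J}" unfolding Z_def by simp
  have "0 \<in> Z" using vJ q0[OF y] unfolding Zeq by simp
  then have Zne: "Z \<noteq> {}" by blast
  have Zb: "bdd_above Z" unfolding Zeq by (rule bdd_aboveI[of _ 1]) auto
  define t where "t = Sup Z"
  have tZ: "t \<in> Z" unfolding t_def using closed_contains_Sup[OF Zne Zb Zc] .
  have up: "\<And>s. 0 \<le> s \<Longrightarrow> s \<le> 1 \<Longrightarrow> fan_q Y (y, s) \<in> J \<Longrightarrow> s \<le> t"
    unfolding t_def using Zb by (intro cSup_upper) (auto simp: Zeq)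
  have t01: "0 \<le> t" "t \<le> 1" "fan_q Y (y, t) \<in> J" using tZ unfolding Zeq by auto
  have mid: "fan_q Y (y, s) \<in> J" if s: "0 \<le> s" "s \<le> t" for s
  proof (rule ccontr)
    assume nJ: "fan_q Y (y, s) \<notin> J"
    have "s \<noteq> 0" using nJ vJ q0[OF y] by auto
    moreover have "s \<noteq> t" using nJ t01 by auto
    ultimately have s0: "0 < s" "s < t" using s by auto
    have ysF: "\<And>y'. y' \<in> Y \<Longrightarrow> (y', s) \<in> fan_F Y" using s0 t01 by (auto simp: inF)
    have cm: "continuous_map (top_of_set Y) (top_of_set (fan_F Y)) (\<lambda>y'. (y', s))"
      using ysF by (auto intro!: continuous_intros)
    have rc2: "continuous_map (top_of_set Y) (fan_C Y) (\<lambda>y'. fan_q Y (y', s))"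
      using continuous_map_compose[OF cm q_cont] by (simp add: o_def)
    define Z' where "Z' = {y' \<in> topspace (top_of_set Y). fan_q Y (y', s) \<in> J}"
    have "closedin (top_of_set Y) Z'"
      unfolding Z'_def by (rule closedin_continuous_map_preimage[OF rc2 Jcl])
    moreover have "y \<notin> Z'" using nJ unfolding Z'_def by simp
    ultimately obtain V where V: "openin (top_of_set Y) V" "openin (top_of_set Y) (Y - V)" "y \<in> V" "V \<inter> Z' = {}"
      using zd y by blast
    let ?P1 = "{p \<in> fan_F Y. fst p \<in> V \<and> snd p > s}"
    let ?P2 = "{p \<in> fan_F Y. fst p \<notin> V \<or> snd p < s}"
    have o1: "openin (fan_C Y) (fan_q Y ` ?P1)" using open_upper[OF V(1)] s0 by simp
    have o2: "openin (fan_C Y) (fan_q Y ` ?P2)" using open_lower[OF V(2)] s0 by simp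
    have cov: "J \<subseteq> fan_q Y ` ?P1 \<union> fan_q Y ` ?P2"
    proof
      fix c assume cJ: "c \<in> J"
      then obtain y' u where yu: "(y', u) \<in> fan_F Y" "c = fan_q Y (y', u)" using JT topT_elim by blast
      show "c \<in> fan_q Y ` ?P1 \<union> fan_q Y ` ?P2"
      proof (cases "y' \<in> V \<and> u = s")
        case True
        then have "y' \<in> Z'" using yu cJ unfolding Z'_def by (auto simp: inF)
        then show ?thesis using True V(4) by blast
      next
        case False
        show ?thesis
        proof (cases "y' \<in> V \<and> u > s")
          case True
          then show ?thesis using yu by (intro UnI1 image_eqI[of _ _ "(y', u)"]) auto
        next
          case False2: False
          then have "y' \<notin> V \<or> u < s" using False by auto
          then show ?thesis using yu by (intro UnI2 image_eqI[of _ _ "(y', u)"]) auto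
        qed
      qed
    qed
    have dj: "fan_q Y ` ?P1 \<inter> fan_q Y ` ?P2 \<inter> J = {}"
    proof (rule ccontr)
      assume "\<not> ?thesis"
      then obtain p p' where pp: "p \<in> ?P1" "p' \<in> ?P2" "fan_q Y p = fan_q Y p'" by blast
      have "snd p \<noteq> 0" using pp(1) s0 by auto
      then have "p = p'" using q_inj_pos pp by blast
      then show False using pp by auto
    qed
    have "fan_q Y (y, t) \<in> fan_q Y ` ?P1" using y V(3) s0 t01 by (intro image_eqI[of _ _ "(y, t)"]) (auto simp: inF)
    then have n1: "fan_q Y ` ?P1 \<inter> J \<noteq> {}" using t01 by blast
    have "fan_q Y (y, 0) \<in> fan_q Y ` ?P2" using y s0 by (intro image_eqI[of _ _ "(y, 0)"]) (auto simp: inF)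
    then have n2: "fan_q Y ` ?P2 \<inter> J \<noteq> {}" using vJ q0[OF y] by auto
    show False using connectedinD[OF Jconn o1 o2 cov dj n1 n2] .
  qed
  show ?thesis using that t01 up mid by blast
qed

lemma rev01: "homeomorphic_map (top_of_set {0..1::real}) (top_of_set {0..1::real}) (\<lambda>x. 1 - x)"
  unfolding homeomorphic_map_maps homeomorphic_maps_def
  by (intro exI[of _ "\<lambda>x. 1 - x"]) (auto intro!: continuous_intros)

lemma endpoint_seg:
  assumes JT: "J \<subseteq> topspace (fan_C Y)" and y: "y \<in> Y" and t: "0 < t" "t \<le> 1"
    and eJ: "fan_q Y (y, t) \<in> J"
    and bound: "\<And>s. 0 \<le> s \<Longrightarrow> s \<le> 1 \<Longrightarrow> fan_q Y (y, s) \<in> J \<Longrightarrow> s \<le> t"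
  shows "end_point (fan_C Y) J (fan_q Y (y, t))"
  unfolding end_point_def
proof (intro conjI allI impI, fact eJ, elim conjE)
  fix A assume AJ: "A \<subseteq> J" and arc: "is_arc (fan_C Y) A" and eA: "fan_q Y (y, t) \<in> A"
  obtain a b \<gamma> where AT: "A \<subseteq> topspace (fan_C Y)"
    and hm: "homeomorphic_map (top_of_set {0..1::real}) (subtopology (fan_C Y) A) \<gamma>"
    and ga: "\<gamma> 0 = a" and gb: "\<gamma> 1 = b"
    using arc unfolding is_arc_def arc_from_to_def by blast
  note af = arc_facts[OF hm AT]
  obtain c where c: "c \<in> {0..1}" "\<gamma> c = fan_q Y (y, t)" using eA af(2) by (metis imageE)
  have yt: "(y, t) \<in> fan_F Y" using y t by (auto simp: inF)
  show "arc_endpoint (fan_C Y) A (fan_q Y (y, t))"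
  proof (cases "c = 0 \<or> c = 1")
    case True
    then show ?thesis
    proof
      assume "c = 0"
      then show ?thesis unfolding arc_endpoint_def arc_from_to_def using AT hm c gb by blast
    next
      assume c1: "c = 1"
      have hm2: "homeomorphic_map (top_of_set {0..1::real}) (subtopology (fan_C Y) A) (\<gamma> \<circ> (\<lambda>x. 1 - x))"
        using homeomorphic_map_compose[OF rev01 hm] .
      have "(\<gamma> \<circ> (\<lambda>x. 1 - x)) 0 = fan_q Y (y, t)" "(\<gamma> \<circ> (\<lambda>x. 1 - x)) 1 = a" using c c1 ga by auto
      then show ?thesis unfolding arc_endpoint_def arc_from_to_def using AT hm2 by blast
    qed
  next
    case False
    then have c01: "0 < c" "c < 1" using c by auto
    define f where "f = ht \<circ> \<gamma>"
    have fc: "continuous_on {0..1} f" using af(4) unfolding f_def .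
    have fct: "f c = t" unfolding f_def using c ht_q'[OF yt] by simp
    obtain \<delta> where d: "\<delta> > 0" "\<And>x'. x' \<in> {0..1} \<Longrightarrow> dist x' c < \<delta> \<Longrightarrow> dist (f x') (f c) < t"
      using fc c t unfolding continuous_on_iff by metis
    define d' where "d' = min (\<delta>/2) (min (c/2) ((1-c)/2))"
    have "d' \<le> \<delta>/2" "d' \<le> c/2" "d' \<le> (1-c)/2" unfolding d'_def
      by (rule min.cobounded1, rule min.coboundedI2[OF min.cobounded1], rule min.coboundedI2[OF min.cobounded2])
    moreover have "0 < d'" using d c01 unfolding d'_def by auto
    ultimately have d': "0 < d'" "d' < \<delta>" "d' < c" "c + d' < 1" using d c01 by auto
    define a1 where "a1 = c - d'"
    define b1 where "b1 = c + d'"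
    have ab: "0 < a1" "a1 < c" "c < b1" "b1 < 1" using d' unfolding a1_def b1_def by auto
    have inab: "\<And>x. x \<in> {a1..b1} \<Longrightarrow> x \<in> {0..1} \<and> dist x c < \<delta>"
      using ab d' unfolding a1_def b1_def by (auto simp: dist_real_def)
    have fpos: "\<And>x. x \<in> {a1..b1} \<Longrightarrow> f x > 0"
    proof -
      fix x assume "x \<in> {a1..b1}"
      then have "dist (f x) (f c) < t" using inab d by blast
      then show "f x > 0" using fct by (auto simp: dist_real_def)
    qed
    have conS: "connectedin (fan_C Y) (\<gamma> ` {a1..b1})"
    proof (rule connectedin_continuous_map_image[OF af(1)])
      show "connectedin (top_of_set {0..1::real}) {a1..b1}"
        unfolding connectedin_subtopology using ab by auto
    qed
    have vS: "fan_top Y \<notin> \<gamma> ` {a1..b1}"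
    proof
      assume "fan_top Y \<in> \<gamma> ` {a1..b1}"
      then obtain x where x: "x \<in> {a1..b1}" "\<gamma> x = fan_top Y" by auto
      then have "f x = 0" unfolding f_def using ht_top[OF y] by simp
      then show False using fpos[OF x(1)] by simp
    qed
    have eS: "fan_q Y (y, t) \<in> \<gamma> ` {a1..b1}" using c ab by force
    have gf: "\<gamma> x = fan_q Y (y, f x) \<and> f x \<le> t" if x: "x \<in> {a1..b1}" for x
    proof -
      have "\<gamma> x \<in> \<gamma> ` {a1..b1}" using x by blast
      then obtain u where u: "(y, u) \<in> fan_F Y" "u > 0" "\<gamma> x = fan_q Y (y, u)"
        using conn_ray[OF conS vS yt eS] by blast
      then have fu: "f x = u" unfolding f_def using ht_q' by simp
      have "\<gamma> x \<in> A" using af(2) inab[OF x] by blast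
      then have "u \<le> t" using bound[of u] u AJ by (auto simp: inF)
      then show ?thesis using u fu by simp
    qed
    have inj: "\<And>x x'. x \<in> {0..1} \<Longrightarrow> x' \<in> {0..1} \<Longrightarrow> \<gamma> x = \<gamma> x' \<Longrightarrow> x = x'"
      using af(3) by (auto dest: inj_onD)
    have a1in: "a1 \<in> {a1..b1}" "b1 \<in> {a1..b1}" "c \<in> {a1..b1}" using ab by auto
    have fa1: "f a1 < t"
    proof -
      have "f a1 \<noteq> t"
      proof
        assume "f a1 = t"
        then have "\<gamma> a1 = \<gamma> c" using gf[OF a1in(1)] c by simp
        then have "a1 = c" using inj[of a1 c] inab[OF a1in(1)] c(1) by blast
        then show False using ab by simp
      qed
      then show ?thesis using gf[OF a1in(1)] by simp
    qed
    have fb1: "f b1 < t"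
    proof -
      have "f b1 \<noteq> t"
      proof
        assume "f b1 = t"
        then have "\<gamma> b1 = \<gamma> c" using gf[OF a1in(2)] c by simp
        then have "b1 = c" using inj[of b1 c] inab[OF a1in(2)] c(1) by blast
        then show False using ab by simp
      qed
      then show ?thesis using gf[OF a1in(2)] by simp
    qed
    show ?thesis
    proof (cases "f a1 \<le> f b1")
      case True
      have "continuous_on {a1..c} f" by (rule continuous_on_subset[OF fc]) (use ab in auto)
      then obtain x where x: "a1 \<le> x" "x \<le> c" "f x = f b1"
        using IVT'[of f a1 "f b1" c] True fb1 fct ab by auto
      then have xin: "x \<in> {a1..b1}" using ab by auto
      have "\<gamma> x = \<gamma> b1" using gf[OF xin] gf[OF a1in(2)] x by simp
      then have "x = b1" using inj[of x b1] inab[OF xin] inab[OF a1in(2)] by blast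
      then show ?thesis using x ab by simp
    next
      case False
      have "continuous_on {c..b1} f" by (rule continuous_on_subset[OF fc]) (use ab in auto)
      then obtain x where x: "c \<le> x" "x \<le> b1" "f x = f a1"
        using IVT2'[of f b1 "f a1" c] False fa1 fct ab by auto
      then have xin: "x \<in> {a1..b1}" using ab by auto
      have "\<gamma> x = \<gamma> a1" using gf[OF xin] gf[OF a1in(1)] x by simp
      then have "x = a1" using inj[of x a1] inab[OF xin] inab[OF a1in(1)] by blast
      then show ?thesis using x ab by simp
    qed
  qed
qed

end


context cfan begin

lemma fence_sub: "fence Y J \<subseteq> fan_F Y"
  unfolding fence_def by auto

lemma sub_fence: "subtopology (top_of_set (fan_F Y)) (fence Y J) = top_of_set (fence Y J)"
  using fence_sub[of J] by (simp add: subtopology_subtopology Int_absorb1)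

lemma dir21:
  assumes JT: "J \<subseteq> topspace (fan_C Y)" and vK: "fan_top Y \<in> K" and KJ: "K \<subseteq> J"
    and R: "retraction_onto (top_of_set (fan_F Y)) (fence Y J) (fence Y K) R"
    and comm: "\<forall>x \<in> fence Y J. fan_q Y (R x) = r (fan_q Y x)"
  shows "simple_retraction (fan_C Y) (fan_top Y) J r"
  unfolding simple_retraction_def legs_def
proof (intro ballI, elim CollectE conjE exE)
  fix A e assume AJ: "A \<subseteq> J" and ep: "end_point (fan_C Y) J e" and ev: "e \<noteq> fan_top Y"
    and arc: "arc_from_to (fan_C Y) A (fan_top Y) e"
  have eJ: "e \<in> J" using ep unfolding end_point_def by blast
  then obtain y t where yt: "(y, t) \<in> fan_F Y" "t > 0" "e = fan_q Y (y, t)"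
    using elem_pos[of e] JT ev by blast
  have y: "y \<in> Y" "t \<le> 1" using yt by (auto simp: inF)
  have Aseg: "A = seg Y y t" using leg_is_seg[OF arc yt(3,1,2)] .
  have Rc: "continuous_map (subtopology (top_of_set (fan_F Y)) (fence Y J)) (subtopology (top_of_set (fan_F Y)) (fence Y K)) R"
    and Rfix: "\<And>z. z \<in> fence Y K \<Longrightarrow> R z = z"
    using R unfolding retraction_onto_def by auto
  have fKJ: "fence Y K \<subseteq> fence Y J" using KJ unfolding fence_def by auto
  show "r ` A \<subseteq> A"
  proof
    fix z assume "z \<in> r ` A"
    then obtain x where x: "x \<in> A" "z = r x" by blast
    then obtain s where s: "s \<in> {0..t}" "x = fan_q Y (y, s)" unfolding Aseg seg_def by auto
    define L where "L = (\<lambda>w. (y, w)) ` {0..s}"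
    have LJ: "L \<subseteq> fence Y J"
    proof
      fix p assume "p \<in> L"
      then obtain w where w: "w \<in> {0..s}" "p = (y, w)" unfolding L_def by auto
      have "fan_q Y (y, w) \<in> A" unfolding Aseg using w s by (intro seg_mem) auto
      then show "p \<in> fence Y J" using w s y AJ unfolding fence_def by (auto simp: inF)
    qed
    have "connected L" unfolding L_def
      by (rule connected_continuous_image) (auto intro!: continuous_intros)
    then have connL: "connectedin (subtopology (top_of_set (fan_F Y)) (fence Y J)) L"
      using LJ fence_sub[of J] by (auto simp: connectedin_subtopology)
    define P where "P = R ` L"
    have "connectedin (subtopology (top_of_set (fan_F Y)) (fence Y K)) P"
      unfolding P_def by (rule connectedin_continuous_map_image[OF Rc connL])
    then have connP: "connected P" and PK: "P \<subseteq> fence Y K"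
      by (auto simp: connectedin_subtopology)
    have PF: "P \<subseteq> fan_F Y" using PK fence_sub[of K] by blast
    have y0K: "(y, 0) \<in> fence Y K" using y vK q0[OF y(1)] unfolding fence_def by (auto simp: inF)
    have "(y, 0) \<in> L" unfolding L_def using s by auto
    then have y0P: "(y, 0) \<in> P" unfolding P_def using Rfix[OF y0K] by force
    have fstP: "fst p = y" if pP: "p \<in> P" for p
    proof (rule ccontr)
      assume ne: "fst p \<noteq> y"
      have pY: "fst p \<in> Y" using pP PF by (auto simp: fan_F_def)
      obtain V where V: "openin (top_of_set Y) V" "openin (top_of_set Y) (Y - V)" "y \<in> V" "fst p \<notin> V"
        using sep[OF y(1) pY] ne by metis
      obtain U1 where U1: "open U1" "V = Y \<inter> U1" using V(1) openin_open by metis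
      obtain U2 where U2: "open U2" "Y - V = Y \<inter> U2" using V(2) openin_open by metis
      have o1: "open (U1 \<times> (UNIV :: real set))" using U1 by (intro open_Times) auto
      have o2: "open (U2 \<times> (UNIV :: real set))" using U2 by (intro open_Times) auto
      have PY: "\<And>p. p \<in> P \<Longrightarrow> fst p \<in> Y" using PF by (auto simp: fan_F_def)
      have dj: "(U1 \<times> UNIV) \<inter> (U2 \<times> UNIV) \<inter> P = {}"
      proof (rule ccontr)
        assume "\<not> ?thesis"
        then obtain p' where "p' \<in> P" "fst p' \<in> U1" "fst p' \<in> U2" by auto
        then have "fst p' \<in> V" "fst p' \<in> Y - V" using U1 U2 PY by auto
        then show False by simp
      qed
      have cov: "P \<subseteq> (U1 \<times> UNIV) \<union> (U2 \<times> UNIV)"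
      proof
        fix p' assume "p' \<in> P"
        then have "fst p' \<in> Y" using PY by blast
        then have "fst p' \<in> U1 \<or> fst p' \<in> U2" using U1 U2 by blast
        then show "p' \<in> (U1 \<times> UNIV) \<union> (U2 \<times> UNIV)" by (cases p') auto
      qed
      have "(y, 0) \<in> (U1 \<times> UNIV) \<inter> P" using y0P V(3) U1 by auto
      moreover have "p \<in> (U2 \<times> UNIV) \<inter> P" using pP V(4) pY U2 by (cases p) auto
      ultimately show False using connectedD[OF connP o1 o2 dj cov] by blast
    qed
    have ysL: "(y, s) \<in> L" unfolding L_def using s by auto
    have RP: "R (y, s) \<in> P" unfolding P_def using ysL by blast
    define u where "u = snd (R (y, s))"
    have Rys: "R (y, s) = (y, u)" using fstP[OF RP] unfolding u_def by (cases "R (y, s)") auto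
    have yu: "(y, u) \<in> fence Y K" using RP PK Rys by auto
    then have u01: "0 \<le> u" "u \<le> 1" using fence_sub[of K] by (auto simp: inF)
    have "(y, s) \<in> fence Y J" using LJ ysL by blast
    then have rx: "r x = fan_q Y (y, u)" using comm s Rys by auto
    have segJ: "fan_q Y (y, w) \<in> J" if w: "w \<in> {0..u}" for w
    proof -
      have "connected (snd ` P)" by (rule connected_continuous_image[OF _ connP]) (intro continuous_intros)
      moreover have "0 \<in> snd ` P" using y0P by force
      moreover have "u \<in> snd ` P" using RP Rys by force
      ultimately have "{0..u} \<subseteq> snd ` P" by (rule connected_contains_Icc)
      then obtain p where p: "p \<in> P" "snd p = w" using w by auto
      then have "p = (y, w)" using fstP[OF p(1)] by (cases p) auto
      then have "(y, w) \<in> fence Y J" using p PK fKJ by auto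
      then show ?thesis unfolding fence_def by auto
    qed
    have ut: "u \<le> t"
    proof (rule ccontr)
      assume "\<not> u \<le> t"
      then have tu: "t < u" by simp
      have segu: "seg Y y u \<subseteq> J" using segJ unfolding seg_def by auto
      have "0 < u" using tu yt by simp
      then have "is_arc (fan_C Y) (seg Y y u)"
        unfolding is_arc_def using arc_seg[OF y(1) _ u01(2)] by blast
      moreover have "e \<in> seg Y y u" using yt tu by (auto intro: seg_mem)
      ultimately have "arc_endpoint (fan_C Y) (seg Y y u) e"
        using ep segu unfolding end_point_def by blast
      then show False using not_endpoint[OF y(1) yt(2) tu u01(2)] yt by simp
    qed
    have "r x \<in> seg Y y t" unfolding rx using u01 ut by (intro seg_mem) auto
    then show "z \<in> A" using x Aseg by simp
  qed
qed

end


context cfan begin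

lemma dir12:
  assumes Jc: "compactin (fan_C Y) J" and Jconn: "connectedin (fan_C Y) J"
    and vK: "fan_top Y \<in> K" and KJ: "K \<subseteq> J"
    and r: "retraction_onto (fan_C Y) J K r"
    and simple: "simple_retraction (fan_C Y) (fan_top Y) J r"
  shows "\<exists>R. retraction_onto (top_of_set (fan_F Y)) (fence Y J) (fence Y K) R \<and>
              (\<forall>x \<in> fence Y J. fan_q Y (R x) = r (fan_q Y x))"
proof -
  have JT: "J \<subseteq> topspace (fan_C Y)" using compactin_subset_topspace[OF Jc] .
  have vJ: "fan_top Y \<in> J" using vK KJ by blast
  have rc: "continuous_map (subtopology (fan_C Y) J) (subtopology (fan_C Y) K) r"
    and rfix: "\<And>z. z \<in> K \<Longrightarrow> r z = z" using r unfolding retraction_onto_def by auto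
  have rK: "\<And>c. c \<in> J \<Longrightarrow> r c \<in> K"
  proof -
    fix c assume "c \<in> J"
    then have "c \<in> topspace (subtopology (fan_C Y) J)" using JT by auto
    then have "r c \<in> topspace (subtopology (fan_C Y) K)" using rc unfolding continuous_map_def by blast
    then show "r c \<in> K" by simp
  qed
  define R where "R = (\<lambda>x. (fst x, ht (r (fan_q Y x))))"
  have key: "fan_q Y (R x) = r (fan_q Y x) \<and> R x \<in> fan_F Y" if x: "x \<in> fence Y J" for x
  proof -
    obtain y s where ys: "x = (y, s)" by force
    have ysF: "(y, s) \<in> fan_F Y" and qJ: "fan_q Y (y, s) \<in> J" using x ys unfolding fence_def by auto
    have y: "y \<in> Y" "0 \<le> s" "s \<le> 1" using ysF by (auto simp: inF)
    show ?thesis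
    proof (cases "s = 0")
      case True
      then have qv: "fan_q Y x = fan_top Y" using ys q0[OF y(1)] by simp
      then have "r (fan_q Y x) = fan_top Y" using rfix vK by simp
      then have "R x = (y, 0)" unfolding R_def using ys ht_top[OF y(1)] by simp
      then show ?thesis using qv \<open>r (fan_q Y x) = fan_top Y\<close> q0[OF y(1)] y by (auto simp: inF)
    next
      case False
      then have s0: "s > 0" using y by simp
      obtain t where t: "0 \<le> t" "t \<le> 1" "fan_q Y (y, t) \<in> J"
        "\<And>s. 0 \<le> s \<Longrightarrow> s \<le> 1 \<Longrightarrow> fan_q Y (y, s) \<in> J \<Longrightarrow> s \<le> t"
        "\<And>s. 0 \<le> s \<Longrightarrow> s \<le> t \<Longrightarrow> fan_q Y (y, s) \<in> J"
        using ray_J[OF Jc Jconn vJ y(1)] by blast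
      have st: "s \<le> t" using t(4)[OF y(2,3) qJ] .
      then have t0: "t > 0" using s0 by simp
      have "seg Y y t \<in> legs (fan_C Y) (fan_top Y) J"
        unfolding legs_def
      proof (intro CollectI conjI exI)
        show "seg Y y t \<subseteq> J" unfolding seg_def using t(5) by auto
        show "end_point (fan_C Y) J (fan_q Y (y, t))"
          by (rule endpoint_seg[OF JT y(1) t0 t(2) t(3) t(4)])
        show "fan_q Y (y, t) \<noteq> fan_top Y" using q_ne_top[of y t Y] y t t0 by (simp add: inF)
        show "arc_from_to (fan_C Y) (seg Y y t) (fan_top Y) (fan_q Y (y, t))"
          by (rule arc_seg[OF y(1) t0 t(2)])
      qed
      then have rseg: "r ` seg Y y t \<subseteq> seg Y y t" using simple unfolding simple_retraction_def by blast
      have "fan_q Y (y, s) \<in> seg Y y t" using st y by (intro seg_mem) auto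
      then have rin: "r (fan_q Y x) \<in> seg Y y t" using rseg ys by blast
      note se = seg_elem[OF rin y(1) t(2)]
      have "R x = (y, ht (r (fan_q Y x)))" unfolding R_def using ys by simp
      then show ?thesis using se t y by (auto simp: inF)
    qed
  qed
  have fKJ: "fence Y K \<subseteq> fence Y J" using KJ unfolding fence_def by auto
  have Rmap: "R \<in> fence Y J \<rightarrow> fence Y K"
  proof
    fix x assume x: "x \<in> fence Y J"
    have "fan_q Y x \<in> J" using x unfolding fence_def by auto
    then show "R x \<in> fence Y K" using key[OF x] rK unfolding fence_def by auto
  qed
  have Rfix: "\<forall>z \<in> fence Y K. R z = z"
  proof
    fix z assume z: "z \<in> fence Y K"
    then have zF: "z \<in> fan_F Y" and "fan_q Y z \<in> K" unfolding fence_def by auto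
    then have "r (fan_q Y z) = fan_q Y z" using rfix by blast
    then show "R z = z" unfolding R_def using ht_q[OF zF] by simp
  qed
  have cq: "continuous_map (top_of_set (fence Y J)) (subtopology (fan_C Y) J) (fan_q Y)"
  proof (rule continuous_map_into_subtopology)
    show "continuous_map (top_of_set (fence Y J)) (fan_C Y) (fan_q Y)"
      using continuous_map_from_subtopology[OF q_cont[of Y], of "fence Y J"] sub_fence[of J] by simp
    show "fan_q Y \<in> topspace (top_of_set (fence Y J)) \<rightarrow> J" unfolding fence_def by auto
  qed
  have "continuous_map (top_of_set (fence Y J)) euclideanreal (ht \<circ> (r \<circ> fan_q Y))"
    using continuous_map_compose[OF continuous_map_compose[OF cq rc] continuous_map_from_subtopology[OF ht_cont]] .
  then have cphi: "continuous_on (fence Y J) (\<lambda>x. ht (r (fan_q Y x)))" by (simp add: o_def)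
  have "continuous_on (fence Y J) R" unfolding R_def
    by (intro continuous_on_Pair continuous_on_fst continuous_on_id cphi)
  then have "continuous_map (top_of_set (fence Y J)) (top_of_set (fence Y K)) R"
    using Rmap by simp
  then have Rc: "continuous_map (subtopology (top_of_set (fan_F Y)) (fence Y J)) (subtopology (top_of_set (fan_F Y)) (fence Y K)) R"
    using sub_fence[of J] sub_fence[of K] by simp
  show ?thesis
    unfolding retraction_onto_def using fKJ Rc Rfix key by blast
qed

end

theorem mainTheorem13:
  fixes Y :: "'a::topological_space set"
    and J K :: "('a \<times> real) set set"
    and r :: "('a \<times> real) set \<Rightarrow> ('a \<times> real) set"
  assumes Y: "Y homeomorphic cantor_set"
    and J: "subcontinuum (fan_C Y) J"
    and K: "subcontinuum (fan_C Y) K"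
    and vK: "fan_top Y \<in> K"
    and KJ: "K \<subseteq> J"
    and r: "retraction_onto (fan_C Y) J K r"
  shows "simple_retraction (fan_C Y) (fan_top Y) J r \<longleftrightarrow>
         (\<exists>R. retraction_onto (top_of_set (fan_F Y)) (fence Y J) (fence Y K) R \<and>
              (\<forall>x \<in> fence Y J. fan_q Y (R x) = r (fan_q Y x)))"
proof -
  obtain h g where hg: "homeomorphism Y cantor_set h g" using Y unfolding homeomorphic_def by blast
  interpret cfan Y h g by (rule cfan.intro[OF hg])
  have Jc: "compactin (fan_C Y) J" and Jconn: "connectedin (fan_C Y) J"
    using J unfolding subcontinuum_def by auto
  have JT: "J \<subseteq> topspace (fan_C Y)" using compactin_subset_topspace[OF Jc] .
  show ?thesis
  proof
    assume "simple_retraction (fan_C Y) (fan_top Y) J r"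
    then show "\<exists>R. retraction_onto (top_of_set (fan_F Y)) (fence Y J) (fence Y K) R \<and>
              (\<forall>x \<in> fence Y J. fan_q Y (R x) = r (fan_q Y x))"
      by (rule dir12[OF Jc Jconn vK KJ r])
  next
    assume "\<exists>R. retraction_onto (top_of_set (fan_F Y)) (fence Y J) (fence Y K) R \<and>
              (\<forall>x \<in> fence Y J. fan_q Y (R x) = r (fan_q Y x))"
    then obtain R where R: "retraction_onto (top_of_set (fan_F Y)) (fence Y J) (fence Y K) R"
      and comm: "\<forall>x \<in> fence Y J. fan_q Y (R x) = r (fan_q Y x)" by blast
    show "simple_retraction (fan_C Y) (fan_top Y) J r" by (rule dir21[OF JT vK KJ R comm])
  qed
qed


end
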